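(* Let $w\ge1$ and let $m_1,\dots,m_w$ and $l_1,\dots,l_w$ be positive integers with $m_i\ge 3$ for all $i$ and $l_i\le 3$ for all $i\ge 2$. For an integer $k\ge0$ put \[ L(m,l)=\sum_{\substack{k_1,\dots,k_w\ge0\\ k_1+\dots+k_w=k}}\ \prod_{i=1}^w (k_i+m_i)^{l_i-\frac72}. \] Then for every $\delta>0$ there is a constant $C_\delta$ (depending only on $\delta$) such that for all such data, \[ L(m,l)\le C_\delta^{\sum_i m_i}\,(1+\delta)^k\,(k+m_1)^{l_1-\frac72}. \] *)

theory Defs
  imports Complex_Main
begin

definition compositions :: "nat \<Rightarrow> nat \<Rightarrow> (nat \<Rightarrow> nat) set" where
  "compositions w k = {kk. (\<forall>i. i \<notin> {1..w} \<longrightarrow> kk i = 0) \<and> (\<Sum>i=1..w. kk i) = k}"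

definition Lsum :: "nat \<Rightarrow> (nat \<Rightarrow> nat) \<Rightarrow> (nat \<Rightarrow> nat) \<Rightarrow> nat \<Rightarrow> real" where
  "Lsum w m l k = (\<Sum>kk\<in>compositions w k.
      \<Prod>i=1..w. real (kk i + m i) powr (real (l i) - 7/2))"

end

theory Submission
  imports Defs "HOL-Real_Asymp.Real_Asymp" "HOL-Library.FuncSet"
begin

lemma poly_exp:
  fixes q :: real assumes q: "q > 1"
  shows "\<exists>B\<ge>1. \<forall>n::nat. real n ^ 3 \<le> B * q ^ n"
proof -
  define c where "c = ln q"
  have c: "c > 0" using q by (simp add: c_def)
  have qn: "q ^ n = exp (c * real n)" for n
    using q by (simp add: c_def powr_realpow[symmetric] powr_def mult.commute)
  have "((\<lambda>n::nat. real n ^ 3 / exp (c * real n)) \<longlongrightarrow> 0) at_top"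
    using c by real_asymp
  hence "\<forall>\<^sub>F n in at_top. real n ^ 3 / exp (c * real n) < 1"
    by (rule order_tendstoD) simp
  then obtain N where N: "\<And>n. n \<ge> N \<Longrightarrow> real n ^ 3 / exp (c * real n) < 1"
    by (auto simp: eventually_at_top_linorder)
  show ?thesis
  proof (intro exI[of _ "real N ^ 3 + 1"] conjI allI)
    fix n :: nat
    have q1: "1 \<le> q ^ n" using q by simp
    show "real n ^ 3 \<le> (real N ^ 3 + 1) * q ^ n"
    proof (cases "n \<ge> N")
      case True
      then have "real n ^ 3 \<le> q ^ n" using N[OF True] by (simp add: qn field_simps)
      also have "q ^ n = 1 * q ^ n" by simp
      also have "\<dots> \<le> (real N ^ 3 + 1) * q ^ n" using q1 by (intro mult_right_mono) auto
      finally show ?thesis .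
    next
      case False
      then have "real n ^ 3 \<le> real N ^ 3" by (simp add: power_mono)
      also have "\<dots> = real N ^ 3 * 1 + 0" by simp
      also have "\<dots> \<le> real N ^ 3 * q ^ n + q ^ n" using q1 by (intro add_mono mult_left_mono) auto
      also have "\<dots> = (real N ^ 3 + 1) * q ^ n" by (simp add: algebra_simps)
      finally show ?thesis .
    qed
  qed simp
qed

lemma geom_le:
  fixes x :: real assumes "0 \<le> x" "x < 1"
  shows "(\<Sum>j\<in>{0..k}. x ^ j) \<le> 1 / (1 - x)"
proof -
  have "(\<Sum>j\<in>{0..k}. x ^ j) = (\<Sum>j<Suc k. x ^ j)"
    by (rule sum.cong) auto
  also have "\<dots> = (1 - x ^ Suc k) / (1 - x)" using assms by (subst sum_gp_strict) auto
  also have "\<dots> \<le> 1 / (1 - x)" using assms by (intro divide_right_mono) auto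
  finally show ?thesis .
qed

lemma card_comp:
  fixes x :: real assumes x: "0 < x" "x < 1"
  shows "real (card (compositions w k)) * x ^ k \<le> (1 / (1 - x)) ^ w"
proof -
  define S where "S = compositions w k"
  define g where "g = (\<lambda>kk::nat\<Rightarrow>nat. restrict kk {1..w})"
  define P where "P = PiE {1..w} (\<lambda>_. {0..k})"
  have inj: "inj_on g S"
  proof (rule inj_onI)
    fix a b assume a: "a \<in> S" and b: "b \<in> S" and e: "g a = g b"
    show "a = b"
    proof
      fix i show "a i = b i"
      proof (cases "i \<in> {1..w}")
        case True thus ?thesis using fun_cong[OF e, of i] by (simp add: g_def)
      next
        case False thus ?thesis using a b by (simp add: S_def compositions_def)
      qed
    qed
  qed
  have sub: "g ` S \<subseteq> P"
  proof
    fix h assume "h \<in> g ` S"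
    then obtain kk where kk: "kk \<in> S" "h = g kk" by auto
    have "\<forall>i\<in>{1..w}. kk i \<le> k"
    proof
      fix i assume i: "i \<in> {1..w}"
      have "kk i \<le> (\<Sum>i=1..w. kk i)" using i by (intro member_le_sum) auto
      thus "kk i \<le> k" using kk by (simp add: S_def compositions_def)
    qed
    thus "h \<in> P" using kk by (auto simp: P_def g_def)
  qed
  have finP: "finite P" unfolding P_def by (intro finite_PiE) auto
  have finS: "finite S" using finite_imageD[OF finite_subset[OF sub finP] inj] .
  have "real (card S) * x ^ k = (\<Sum>kk\<in>S. x ^ k)" by simp
  also have "\<dots> = (\<Sum>kk\<in>S. \<Prod>i\<in>{1..w}. x ^ kk i)"
    by (rule sum.cong) (auto simp: S_def compositions_def power_sum[symmetric])
  also have "\<dots> = (\<Sum>h\<in>g ` S. \<Prod>i\<in>{1..w}. x ^ h i)"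
    by (subst sum.reindex[OF inj]) (auto simp: g_def intro!: sum.cong prod.cong)
  also have "\<dots> \<le> (\<Sum>h\<in>P. \<Prod>i\<in>{1..w}. x ^ h i)"
    using x by (intro sum_mono2[OF finP sub]) (auto intro: prod_nonneg)
  also have "\<dots> = (\<Prod>i\<in>{1..w}. \<Sum>j\<in>{0..k}. x ^ j)"
    unfolding P_def by (rule prod_sum_PiE[symmetric]) auto
  also have "\<dots> \<le> (\<Prod>i\<in>{1..w}. 1 / (1 - x))"
    using x by (intro prod_mono conjI geom_le sum_nonneg) auto
  also have "\<dots> = (1 / (1 - x)) ^ w" by simp
  finally show ?thesis by (simp add: S_def)
qed

lemma term_bound:
  fixes x y a :: real
  assumes "1 \<le> x" "x \<le> y" "a \<ge> -5/2"
  shows "x powr a \<le> y powr a * y ^ 3"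
proof -
  have "x powr a \<le> y powr (a + 5/2)"
  proof (cases "a \<ge> 0")
    case True
    have "x powr a \<le> y powr a" using assms True by (intro powr_mono2) auto
    also have "\<dots> \<le> y powr (a + 5/2)" using assms by (intro powr_mono) auto
    finally show ?thesis .
  next
    case False
    have "x powr a \<le> x powr 0" using assms False by (intro powr_mono) auto
    also have "\<dots> = y powr 0" using assms by simp
    also have "\<dots> \<le> y powr (a + 5/2)" using assms by (intro powr_mono) auto
    finally show ?thesis .
  qed
  also have "\<dots> = y powr a * y powr (5/2)" using assms by (simp add: powr_add)
  also have "\<dots> \<le> y powr a * y powr 3" using assms by (intro mult_left_mono powr_mono) auto
  also have "\<dots> = y powr a * y ^ 3" using assms by (simp add: powr_realpow)
  finally show ?thesis .
qed

theorem proposition4p18: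
  fixes \<delta> :: real
  assumes "\<delta> > 0"
  shows "\<exists>C>0. \<forall>w m l k. w \<ge> 1 \<and> (\<forall>i\<in>{1..w}. m i \<ge> 3 \<and> l i \<ge> 1)
            \<and> (\<forall>i\<in>{2..w}. l i \<le> 3) \<longrightarrow>
           Lsum w m l k \<le> C ^ (\<Sum>i=1..w. m i) * (1 + \<delta>) ^ k
                            * real (k + m 1) powr (real (l 1) - 7/2)"
proof -
  define q where "q = sqrt (1 + \<delta>)"
  have q1: "q > 1" using assms by (simp add: q_def)
  have qq: "q * q = 1 + \<delta>" using assms by (simp add: q_def)
  obtain B where B1: "B \<ge> 1" and B: "\<And>n::nat. real n ^ 3 \<le> B * q ^ n"
    using poly_exp[OF q1] by blast
  define E where "E = q / (q - 1)"
  have E1: "E \<ge> 1" using q1 by (simp add: E_def)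
  have E_eq: "1 / (1 - 1 / q) = E" using q1 by (simp add: E_def field_simps)
  define C where "C = E * B * q"
  have "1 * 1 * 1 \<le> E * B * q" using E1 B1 q1 by (intro mult_mono) auto
  hence C1: "C \<ge> 1" by (simp add: C_def)
  show ?thesis
  proof (intro exI[of _ C] conjI allI impI)
    show "C > 0" using C1 by simp
    fix w k :: nat and m l :: "nat \<Rightarrow> nat"
    assume h: "w \<ge> 1 \<and> (\<forall>i\<in>{1..w}. m i \<ge> 3 \<and> l i \<ge> 1) \<and> (\<forall>i\<in>{2..w}. l i \<le> 3)"
    hence w1: "w \<ge> 1" and hm: "\<And>i. i \<in> {1..w} \<Longrightarrow> m i \<ge> 3 \<and> l i \<ge> 1"
      and hl: "\<And>i. i \<in> {2..w} \<Longrightarrow> l i \<le> 3" by auto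
    define S where "S = compositions w k"
    define a where "a = real (l 1) - 7/2"
    define y where "y = real (k + m 1)"
    define M where "M = (\<Sum>i=1..w. m i)"
    have one: "1 \<in> {1..w}" using w1 by simp
    have a: "a \<ge> -5/2" using hm[OF one] by (simp add: a_def)
    have y3: "y \<ge> 3" using hm[OF one] by (simp add: y_def)
    have card: "real (card S) \<le> E ^ w * q ^ k"
    proof -
      have "real (card S) * (1/q) ^ k \<le> E ^ w"
        using card_comp[of "1/q" w k] q1 E_eq by (simp add: S_def)
      hence "real (card S) * (1/q) ^ k * q ^ k \<le> E ^ w * q ^ k"
        using q1 by (intro mult_right_mono) auto
      thus ?thesis using q1 by (simp add: power_one_over field_simps)
    qed
    have termb: "(\<Prod>i=1..w. real (kk i + m i) powr (real (l i) - 7/2)) \<le> y powr a * y ^ 3"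
      if kk: "kk \<in> S" for kk
    proof -
      have "(\<Prod>i=1..w. real (kk i + m i) powr (real (l i) - 7/2))
          = real (kk 1 + m 1) powr a * (\<Prod>i=Suc 1..w. real (kk i + m i) powr (real (l i) - 7/2))"
        using w1 by (simp add: prod.atLeast_Suc_atMost a_def)
      also have "\<dots> \<le> real (kk 1 + m 1) powr a * 1"
      proof (intro mult_left_mono prod_le_1 conjI)
        fix i assume i: "i \<in> {Suc 1..w}"
        have "real (kk i + m i) \<ge> 1" using hm[of i] i by auto
        hence "real (kk i + m i) powr (real (l i) - 7/2) \<le> real (kk i + m i) powr 0"
          using hl[of i] i by (intro powr_mono) auto
        thus "real (kk i + m i) powr (real (l i) - 7/2) \<le> 1"
          using \<open>real (kk i + m i) \<ge> 1\<close> by (simp del: of_nat_add split: if_splits)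
      qed auto
      also have "\<dots> \<le> y powr a * y ^ 3"
      proof -
        have "kk 1 \<le> (\<Sum>i=1..w. kk i)" using one by (intro member_le_sum) auto
        hence "kk 1 \<le> k" using kk by (simp add: S_def compositions_def)
        hence "real (kk 1 + m 1) \<le> y" by (simp add: y_def)
        moreover have "real (kk 1 + m 1) \<ge> 1" using hm[OF one] by simp
        ultimately show ?thesis using term_bound[OF _ _ a] by simp
      qed
      finally show ?thesis .
    qed
    have "Lsum w m l k \<le> real (card S) * (y powr a * y ^ 3)"
      unfolding Lsum_def S_def[symmetric] by (rule sum_bounded_above) (rule termb)
    also have "\<dots> \<le> (E ^ w * q ^ k) * (y powr a * (B * q ^ (k + m 1)))"
    proof (intro mult_mono card mult_left_mono)
      show "y ^ 3 \<le> B * q ^ (k + m 1)" using B[of "k + m 1"] by (simp add: y_def)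
    qed (use q1 E1 y3 in auto)
    also have "\<dots> = (E ^ w * B * q ^ m 1) * (q * q) ^ k * y powr a"
      by (simp add: power_add power_mult_distrib algebra_simps)
    also have "\<dots> = (E ^ w * B * q ^ m 1) * (1 + \<delta>) ^ k * y powr a"
      by (simp add: qq)
    also have "\<dots> \<le> C ^ M * (1 + \<delta>) ^ k * y powr a"
    proof (intro mult_right_mono)
      have wM: "w \<le> M"
      proof -
        have "(\<Sum>i=1..w. (1::nat)) \<le> M" unfolding M_def
          using hm by (intro sum_mono) (smt (verit) le_trans numeral_le_one_iff one_le_numeral)
        thus ?thesis by simp
      qed
      have mM: "m 1 \<le> M" unfolding M_def using one by (intro member_le_sum) auto
      have M1: "1 \<le> M" using hm[OF one] mM by simp
      have "E ^ w \<le> E ^ M" using E1 wM by (intro power_increasing) auto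
      moreover have "B \<le> B ^ M" using B1 M1 by (metis power_increasing power_one_right)
      moreover have "q ^ m 1 \<le> q ^ M" using q1 mM by (intro power_increasing) auto
      ultimately have "E ^ w * B * q ^ m 1 \<le> E ^ M * B ^ M * q ^ M"
        using E1 B1 q1 by (intro mult_mono) auto
      also have "\<dots> = C ^ M" by (simp add: C_def power_mult_distrib)
      finally show "E ^ w * B * q ^ m 1 \<le> C ^ M" .
    qed (use assms in auto)
    finally show "Lsum w m l k \<le> C ^ (\<Sum>i=1..w. m i) * (1 + \<delta>) ^ k
                            * real (k + m 1) powr (real (l 1) - 7/2)"
      by (simp add: M_def y_def a_def)
  qed
qed

end
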